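(* Let $n\ge1$, $N\ge1$, $p\in(0,1)$, and let $I:\{0,1\}^n\to\{0,1\}$ be a decoding-error indicator with error-correcting capability $t$ ($0\le t<n$, $I(\mathbf z)=0$ whenever $wt(\mathbf z)\le t$). For $q\in(0,1)$ let $\hat P_{IS}(e)=\frac1N\sum_{j=1}^N I(\mathbf z_j)W(wt(\mathbf z_j);p,q)$ with $\mathbf z_j$ i.i.d. with pmf $q^{wt(\mathbf z)}(1-q)^{n-wt(\mathbf z)}$. Then the function $q\mapsto\mathrm{var}_q[\hat P_{IS}(e)]$ is convex on $(0,1)$.
   Context: Setting: linear block code of length $n$ over a binary symmetric channel with cross-over probability $p$; all-zero codeword transmitted so the channel output is the error pattern $\mathbf z\in\{0,1\}^n$. $wt(\mathbf z)$ is the number of ones. $I(\mathbf z)=1$ iff $\mathbf z$ is erroneously decoded. $W(i;p,q)=\frac{p^i(1-p)^{n-i}}{q^i(1-q)^{n-i}}$. $\mathrm{var}_q$ is the variance when samples have pmf $q^{wt(\mathbf z)}(1-q)^{n-wt(\mathbf z)}$. *)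

theory Defs
  imports "HOL-Probability.Probability"
begin

text \<open>Binary words of length n are modelled as functions nat => bool, with
  coordinates 0..<n relevant (values outside are False, the default of Pi_pmf).\<close>

definition wt :: "nat \<Rightarrow> (nat \<Rightarrow> bool) \<Rightarrow> nat" where
  "wt n z = card {i \<in> {..<n}. z i}"

definition W :: "nat \<Rightarrow> nat \<Rightarrow> real \<Rightarrow> real \<Rightarrow> real" where
  "W n i p q = (p ^ i * (1 - p) ^ (n - i)) / (q ^ i * (1 - q) ^ (n - i))"

text \<open>Distribution of one error pattern: i.i.d. Bernoulli(q) bits, so its pmf is
  q^wt(z) (1-q)^(n-wt(z)) on {0,1}^n.\<close>
definition pattern_pmf :: "nat \<Rightarrow> real \<Rightarrow> (nat \<Rightarrow> bool) pmf" where
  "pattern_pmf n q = Pi_pmf {..<n} False (\<lambda>_. bernoulli_pmf q)"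

definition samples_pmf :: "nat \<Rightarrow> nat \<Rightarrow> real \<Rightarrow> (nat \<Rightarrow> nat \<Rightarrow> bool) pmf" where
  "samples_pmf N n q = Pi_pmf {..<N} (\<lambda>_. False) (\<lambda>_. pattern_pmf n q)"

definition P_IS :: "nat \<Rightarrow> nat \<Rightarrow> ((nat \<Rightarrow> bool) \<Rightarrow> real) \<Rightarrow> real \<Rightarrow> real
    \<Rightarrow> (nat \<Rightarrow> nat \<Rightarrow> bool) \<Rightarrow> real" where
  "P_IS N n I p q zs = (1 / real N) * (\<Sum>j<N. I (zs j) * W n (wt n (zs j)) p q)"

definition var_IS :: "nat \<Rightarrow> nat \<Rightarrow> ((nat \<Rightarrow> bool) \<Rightarrow> real) \<Rightarrow> real \<Rightarrow> real \<Rightarrow> real" where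
  "var_IS N n I p q = measure_pmf.variance (samples_pmf N n q) (P_IS N n I p q)"

end

theory Submission
  imports Defs
begin

lemma iid_var:
  fixes M :: "'a pmf" and f :: "'a \<Rightarrow> real" and N :: nat
  assumes fin: "finite (set_pmf M)" and nn: "\<And>z. z \<in> set_pmf M \<Longrightarrow> f z \<ge> 0" and N: "N \<ge> 1"
  shows "measure_pmf.variance (Pi_pmf {..<N} d (\<lambda>_. M)) (\<lambda>zs. (1 / real N) * (\<Sum>j<N. f (zs j)))
     = (measure_pmf.expectation M (\<lambda>z. (f z)\<^sup>2) - (measure_pmf.expectation M f)\<^sup>2) / real N"
proof -
  let ?P = "Pi_pmf {..<N} d (\<lambda>_. M)"
  have finP: "finite (set_pmf ?P)"
    by (rule finite_subset[OF set_Pi_pmf_subset'[of "{..<N}" d "\<lambda>_. M"]]) (use fin in auto)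
  have intP: "integrable (measure_pmf ?P) g" for g :: "_ \<Rightarrow> real"
    using finP by (rule integrable_measure_pmf_finite)
  have intM: "integrable (measure_pmf M) g" for g :: "_ \<Rightarrow> real"
    using fin by (rule integrable_measure_pmf_finite)
  have pair: "measure_pmf.expectation ?P (\<lambda>zs. f (zs j) * f (zs k)) =
      (if j = k then measure_pmf.expectation M (\<lambda>z. (f z)\<^sup>2) else (measure_pmf.expectation M f)^2)"
    if "j < N" "k < N" for j k
  proof -
    define F where "F = (\<lambda>x v. (if x = j then f v else 1) * (if x = k then f v else 1))"
    have "measure_pmf.expectation ?P (\<lambda>y. \<Prod>x\<in>{..<N}. F x (y x)) =
          (\<Prod>x\<in>{..<N}. measure_pmf.expectation M (F x))"
      by (rule expectation_prod_Pi_pmf) (auto simp: F_def intro!: intM mult_nonneg_nonneg nn)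
    moreover have "(\<Prod>x\<in>{..<N}. F x (y x)) = f (y j) * f (y k)" for y
      using that by (simp add: F_def prod.distrib prod.delta)
    moreover have "(\<Prod>x\<in>{..<N}. measure_pmf.expectation M (F x)) =
      (if j = k then measure_pmf.expectation M (\<lambda>z. (f z)\<^sup>2) else (measure_pmf.expectation M f)^2)"
    proof (cases "j = k")
      case True
      have "(\<Prod>x\<in>{..<N}. measure_pmf.expectation M (F x)) = 
            (\<Prod>x\<in>{..<N}. if x = j then measure_pmf.expectation M (\<lambda>z. (f z)\<^sup>2) else 1)"
        by (intro prod.cong) (auto simp: F_def True power2_eq_square)
      then show ?thesis using that True by (simp add: prod.delta)
    next
      case False
      have "(\<Prod>x\<in>{..<N}. measure_pmf.expectation M (F x)) = 
            (\<Prod>x\<in>{..<N}. (if x = j then measure_pmf.expectation M f else 1) * (if x = k then measure_pmf.expectation M f else 1))"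
        by (intro prod.cong) (auto simp: F_def False)
      then show ?thesis using that False by (simp add: prod.distrib prod.delta power2_eq_square)
    qed
    ultimately show ?thesis by simp
  qed
  have single: "measure_pmf.expectation ?P (\<lambda>zs. f (zs j)) = measure_pmf.expectation M f" if "j < N" for j
  proof -
    have "measure_pmf.expectation ?P (\<lambda>zs. f (zs j)) = measure_pmf.expectation (map_pmf (\<lambda>zs. zs j) ?P) f"
      by simp
    also have "map_pmf (\<lambda>zs. zs j) ?P = M" using that by (simp add: Pi_pmf_component)
    finally show ?thesis .
  qed
  let ?E2 = "measure_pmf.expectation M (\<lambda>z. (f z)\<^sup>2)" and ?E1 = "measure_pmf.expectation M f"
  have e1: "measure_pmf.expectation ?P (\<lambda>zs. (1 / real N) * (\<Sum>j<N. f (zs j))) = ?E1"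
    using N by (simp add: integral_sum intP single)
  have "measure_pmf.expectation ?P (\<lambda>zs. ((1 / real N) * (\<Sum>j<N. f (zs j)))\<^sup>2)
      = (1 / real N)^2 * (\<Sum>j<N. \<Sum>k<N. measure_pmf.expectation ?P (\<lambda>zs. f (zs j) * f (zs k)))"
    by (simp add: power_mult_distrib power2_eq_square sum_product integral_sum intP)
  also have "(\<Sum>j<N. \<Sum>k<N. measure_pmf.expectation ?P (\<lambda>zs. f (zs j) * f (zs k)))
      = (\<Sum>j<N. \<Sum>k<N. (if j = k then ?E2 else ?E1^2))"
    by (intro sum.cong refl) (simp add: pair)
  also have "\<dots> = (\<Sum>j<N. ?E2 + (real N - 1) * ?E1^2)"
  proof (intro sum.cong refl)
    fix j assume j: "j \<in> {..<N}"
    have "(\<Sum>k<N. (if j = k then ?E2 else ?E1^2)) = (\<Sum>k<N. (if j = k then ?E2 - ?E1^2 else 0) + ?E1^2)"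
      by (intro sum.cong) auto
    also have "\<dots> = ?E2 - ?E1^2 + real N * ?E1^2" using j by (simp add: sum.distrib)
    finally show "(\<Sum>k<N. (if j = k then ?E2 else ?E1^2)) = ?E2 + (real N - 1) * ?E1^2"
      by (simp add: algebra_simps)
  qed
  finally have e2: "measure_pmf.expectation ?P (\<lambda>zs. ((1 / real N) * (\<Sum>j<N. f (zs j)))\<^sup>2)
      = (1 / real N)^2 * (real N * (?E2 + (real N - 1) * ?E1^2))" by simp
  show ?thesis
    apply (subst measure_pmf.variance_eq)
      apply (rule intP) apply (rule intP)
    using N unfolding e1 e2 by (simp add: field_simps power2_eq_square)
qed

lemma convex_G:
  fixes a b :: real assumes "a \<ge> 0" "b \<ge> 0"
  shows "convex_on {0<..<1} (\<lambda>q. exp (- (a * ln q) - b * ln (1 - q)))"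
proof (rule f''_ge0_imp_convex[where f' = "\<lambda>q. exp (- (a * ln q) - b * ln (1 - q)) * (- a / q + b / (1 - q))"
    and f'' = "\<lambda>q. exp (- (a * ln q) - b * ln (1 - q)) * ((- a / q + b / (1 - q))^2 + (a / q^2 + b / (1 - q)^2))"])
  show "convex {0<..<(1::real)}" by simp
next
  fix x :: real assume x: "x \<in> {0<..<1}"
  show "((\<lambda>q. exp (- (a * ln q) - b * ln (1 - q))) has_real_derivative
     exp (- (a * ln x) - b * ln (1 - x)) * (- a / x + b / (1 - x))) (at x)"
    using x by (auto intro!: derivative_eq_intros simp: field_simps)
  have d1: "((\<lambda>q. exp (- (a * ln q) - b * ln (1 - q))) has_real_derivative
     exp (- (a * ln x) - b * ln (1 - x)) * (- a / x + b / (1 - x))) (at x)"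
    using x by (auto intro!: derivative_eq_intros simp: field_simps)
  have d2: "((\<lambda>q. - a / q + b / (1 - q)) has_real_derivative (a / x^2 + b / (1 - x)^2)) (at x)"
    using x by (auto intro!: derivative_eq_intros simp: field_simps power2_eq_square)
  show "((\<lambda>q. exp (- (a * ln q) - b * ln (1 - q)) * (- a / q + b / (1 - q))) has_real_derivative
     exp (- (a * ln x) - b * ln (1 - x)) * ((- a / x + b / (1 - x))^2 + (a / x^2 + b / (1 - x)^2))) (at x)"
    by (rule DERIV_cong[OF DERIV_mult[OF d1 d2]]) (use x in \<open>simp add: power2_eq_square field_simps\<close>)
  show "0 \<le> exp (- (a * ln x) - b * ln (1 - x)) * ((- a / x + b / (1 - x))^2 + (a / x^2 + b / (1 - x)^2))"
    using assms by (intro mult_nonneg_nonneg add_nonneg_nonneg) auto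
qed

lemma G_eq:
  fixes q :: real assumes "0 < q" "q < 1"
  shows "exp (- (real w * ln q) - real m * ln (1 - q)) = 1 / (q ^ w * (1 - q) ^ m)"
proof -
  have "exp (- (real w * ln q) - real m * ln (1 - q)) = inverse (exp (ln q) ^ w * exp (ln (1-q)) ^ m)"
    by (simp add: exp_diff exp_minus exp_of_nat_mult[symmetric] divide_inverse inverse_mult_distrib mult.commute)
  then show ?thesis using assms by (simp add: divide_inverse)
qed

lemma convex_on_eq:
  assumes "convex_on S f" "\<And>x. x \<in> S \<Longrightarrow> f x = g x"
  shows "convex_on S g"
  using assms unfolding convex_on_def by (auto simp: convexD)

lemma convex_on_sum_fun:
  fixes F :: "'b \<Rightarrow> 'a::real_vector \<Rightarrow> real"
  assumes "finite A" "\<And>z. z \<in> A \<Longrightarrow> convex_on S (F z)" "convex S"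
  shows "convex_on S (\<lambda>x. \<Sum>z\<in>A. F z x)"
  using assms by (induction A rule: finite_induct) (auto simp: convex_on_const)

lemma pmf_pattern:
  assumes "\<forall>i\<ge>n. \<not> z i" "0 \<le> q" "q \<le> 1"
  shows "pmf (pattern_pmf n q) z = q ^ wt n z * (1 - q) ^ (n - wt n z)"
proof -
  have "pmf (pattern_pmf n q) z = (\<Prod>i\<in>{..<n}. if z i then q else 1 - q)"
    using assms by (auto simp: pattern_pmf_def pmf_Pi intro!: prod.cong)
  also have "\<dots> = q ^ card {i \<in> {..<n}. z i} * (1 - q) ^ card {i \<in> {..<n}. \<not> z i}"
    by (simp add: prod.If_cases Int_def)
  also have "card {i \<in> {..<n}. \<not> z i} = n - wt n z"
  proof -
    have "{i \<in> {..<n}. \<not> z i} = {..<n} - {i \<in> {..<n}. z i}" by auto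
    moreover have "card ({..<n} - {i \<in> {..<n}. z i}) = n - card {i \<in> {..<n}. z i}"
      by (subst card_Diff_subset) auto
    ultimately show ?thesis by (simp add: wt_def)
  qed
  finally show ?thesis by (simp add: wt_def)
qed


theorem lemma3:
  fixes n N t :: nat and p :: real and I :: "(nat \<Rightarrow> bool) \<Rightarrow> real"
  assumes "n \<ge> 1" and "N \<ge> 1" and "0 < p" and "p < 1"
    and "t < n"
    and "\<And>z. (\<forall>i\<ge>n. \<not> z i) \<Longrightarrow> I z \<in> {0, 1}"
    and "\<And>z. (\<forall>i\<ge>n. \<not> z i) \<Longrightarrow> wt n z \<le> t \<Longrightarrow> I z = 0"
  shows "convex_on {0<..<1} (\<lambda>q. var_IS N n I p q)"
proof -
  define A where "A = PiE_dflt {..<n} False (\<lambda>_. UNIV :: bool set)"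
  have finA: "finite A" unfolding A_def by (intro finite_PiE_dflt) auto
  have inA: "\<forall>i\<ge>n. \<not> z i" if "z \<in> A" for z using that by (auto simp: A_def PiE_dflt_def)
  have setA: "set_pmf (pattern_pmf n q) \<subseteq> A" for q
    unfolding pattern_pmf_def A_def
    by (rule order.trans[OF set_Pi_pmf_subset']) (auto simp: PiE_dflt_def)
  define pw where "pw = (\<lambda>z. p ^ wt n z * (1 - p) ^ (n - wt n z))"
  define c where "c = (\<lambda>z. (I z)^2 * (pw z)^2 / real N)"
  define Cst where "Cst = (\<Sum>z\<in>A. I z * pw z)"
  define H where "H = (\<lambda>q::real. (\<Sum>z\<in>A. c z * exp (- (real (wt n z) * ln q) - real (n - wt n z) * ln (1 - q))) + (- (Cst\<^sup>2 / real N)))"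
  have convH: "convex_on {0<..<1} H"
    unfolding H_def
    by (intro convex_on_add convex_on_sum_fun finA convex_on_cmul convex_G)
       (auto simp: c_def convex_on_const)
  show ?thesis
  proof (rule convex_on_eq[OF convH])
    fix q :: real assume q: "q \<in> {0<..<1}"
    hence q0: "0 < q" "q < 1" by auto
    define f where "f = (\<lambda>z. I z * W n (wt n z) p q)"
    have pos: "q ^ wt n z * (1 - q) ^ (n - wt n z) > 0" for z using q0 by auto
    have Wnn: "W n (wt n z) p q \<ge> 0" for z
      using q0 assms(3,4) unfolding W_def by (intro divide_nonneg_nonneg mult_nonneg_nonneg) auto
    have nn: "f z \<ge> 0" if "z \<in> set_pmf (pattern_pmf n q)" for z
    proof -
      have "I z \<in> {0,1}" using assms(6) inA setA that by blast
      then show ?thesis using Wnn[of z] unfolding f_def by auto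
    qed
    have finS: "finite (set_pmf (pattern_pmf n q))" using finA setA by (rule finite_subset[rotated])
    have v: "var_IS N n I p q = (measure_pmf.expectation (pattern_pmf n q) (\<lambda>z. (f z)\<^sup>2) -
                  (measure_pmf.expectation (pattern_pmf n q) f)\<^sup>2) / real N"
      unfolding var_IS_def samples_pmf_def P_IS_def f_def
      using iid_var[OF finS, of f N "\<lambda>_. False"] nn assms(2) unfolding f_def by simp
    have e1: "measure_pmf.expectation (pattern_pmf n q) f = Cst"
    proof -
      have "measure_pmf.expectation (pattern_pmf n q) f = (\<Sum>z\<in>A. f z * pmf (pattern_pmf n q) z)"
        by (rule integral_measure_pmf_real[OF finA]) (use setA in blast)
      also have "\<dots> = Cst" unfolding Cst_def
      proof (intro sum.cong refl)
        fix z assume z: "z \<in> A"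
        have "f z * pmf (pattern_pmf n q) z = I z * (W n (wt n z) p q * (q ^ wt n z * (1 - q) ^ (n - wt n z)))"
          using pmf_pattern[OF inA[OF z]] q0 unfolding f_def by simp
        also have "\<dots> = I z * pw z" unfolding W_def pw_def using pos[of z] q0 by simp
        finally show "f z * pmf (pattern_pmf n q) z = I z * pw z" .
      qed
      finally show ?thesis .
    qed
    have e2: "measure_pmf.expectation (pattern_pmf n q) (\<lambda>z. (f z)\<^sup>2) =
        (\<Sum>z\<in>A. (I z)^2 * (pw z)^2 * exp (- (real (wt n z) * ln q) - real (n - wt n z) * ln (1 - q)))"
    proof -
      have "measure_pmf.expectation (pattern_pmf n q) (\<lambda>z. (f z)\<^sup>2) = (\<Sum>z\<in>A. (f z)\<^sup>2 * pmf (pattern_pmf n q) z)"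
        by (rule integral_measure_pmf_real[OF finA]) (use setA in blast)
      also have "\<dots> = (\<Sum>z\<in>A. (I z)^2 * (pw z)^2 * exp (- (real (wt n z) * ln q) - real (n - wt n z) * ln (1 - q)))"
      proof (intro sum.cong refl)
        fix z assume z: "z \<in> A"
        have "(f z)\<^sup>2 * pmf (pattern_pmf n q) z = (I z)^2 * (W n (wt n z) p q)^2 * (q ^ wt n z * (1 - q) ^ (n - wt n z))"
          using pmf_pattern[OF inA[OF z]] q0 unfolding f_def by (simp add: power_mult_distrib)
        also have "\<dots> = (I z)^2 * (pw z)^2 * (1 / (q ^ wt n z * (1 - q) ^ (n - wt n z)))"
          unfolding W_def pw_def using pos[of z] by (simp add: power2_eq_square field_simps)
        finally show "(f z)\<^sup>2 * pmf (pattern_pmf n q) z = (I z)^2 * (pw z)^2 * exp (- (real (wt n z) * ln q) - real (n - wt n z) * ln (1 - q))"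
          using G_eq[OF q0] by simp
      qed
      finally show ?thesis .
    qed
    show "H q = var_IS N n I p q"
      unfolding v e1 e2 H_def c_def by (simp add: sum_divide_distrib diff_divide_distrib)
  qed
qed

end
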